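(* Consider the following symmetric two-player game between two responders, induced by two fixed offers $s_1,s_2\in[0,1]$ with $s_1\le s_2$, $s_2>0$ and $s_2<2s_1$. Each responder chooses proposer 1 with probability $p$ and proposer 2 with probability $1-p$, where $p\in[0,1]$. If responder 1 uses $p$ and responder 2 uses $q$, the expected payoff of responder 1 is $$\Pi(p,q)=s_1\,p\Big(1-q+\tfrac{q}{2}\Big)+s_2\,(1-p)\Big(q+\tfrac{1-q}{2}\Big),$$ and that of responder 2 is $\Pi(q,p)$. Then the strategy $$p_A=\frac{2s_1-s_2}{s_1+s_2}$$ is an evolutionarily stable strategy of this game, and it is the unique evolutionarily stable strategy of this game.
   Context: The game arises from the Multi-Proposer-Multi-Responder Ultimatum Game with two proposers and two responders: each proposer $i$ offers a share $s_i$ of a reward of size one to the responders; each responder selects one proposer (possibly at random); a proposer chosen by at least one responder receives $1-s_i$; if several responders choose the same proposer, exactly one of them, chosen uniformly at random, receives $s_i$ and the others receive $0$. A strategy $p$ of a symmetric two-player game with payoff $\Pi$ is evolutionarily stable if for every strategy $q\neq p$ either $\Pi(p,p)>\Pi(q,p)$, or $\Pi(p,p)=\Pi(q,p)$ and $\Pi(p,q)>\Pi(q,q)$. *)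

theory Defs
  imports Complex_Main
begin

definition resp_payoff :: "real \<Rightarrow> real \<Rightarrow> real \<Rightarrow> real \<Rightarrow> real" where
  "resp_payoff s1 s2 p q = s1 * p * (1 - q + q / 2) + s2 * (1 - p) * (q + (1 - q) / 2)"

definition ESS :: "'a set \<Rightarrow> ('a \<Rightarrow> 'a \<Rightarrow> real) \<Rightarrow> 'a \<Rightarrow> bool" where
  "ESS S Pi p \<longleftrightarrow> p \<in> S \<and> (\<forall>q\<in>S. q \<noteq> p \<longrightarrow>
      (Pi p p > Pi q p \<or> (Pi p p = Pi q p \<and> Pi p q > Pi q q)))"

end

theory Submission
  imports Defs
begin

lemma diff_id: "resp_payoff s1 s2 x q - resp_payoff s1 s2 y q
   = (x - y) * ((2*s1 - s2) - q*(s1+s2)) / 2"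
  unfolding resp_payoff_def by (simp add: field_simps)

theorem theorem1:
  fixes s1 s2 :: real
  assumes "0 \<le> s1" "s1 \<le> 1" "0 \<le> s2" "s2 \<le> 1"
    and "s1 \<le> s2" "s2 > 0" "s2 < 2 * s1"
  shows "ESS {0..1} (resp_payoff s1 s2) ((2 * s1 - s2) / (s1 + s2))
    \<and> (\<forall>p. ESS {0..1} (resp_payoff s1 s2) p \<longrightarrow> p = (2 * s1 - s2) / (s1 + s2))"
proof -
  define a where "a = (2 * s1 - s2) / (s1 + s2)"
  have pos: "s1 + s2 > 0" using assms by linarith
  have ha: "2*s1 - s2 = a*(s1+s2)" using pos unfolding a_def by simp
  have key: "resp_payoff s1 s2 x q - resp_payoff s1 s2 y q = (x - y) * (a - q) * (s1+s2) / 2" for x y q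
    unfolding diff_id ha by (simp add: algebra_simps)
  have aS: "a \<in> {0..1}" using assms pos unfolding a_def by (auto simp: field_simps)
  have eq: "resp_payoff s1 s2 a a = resp_payoff s1 s2 q a" for q
    using key[of a a q] by simp
  have ess: "ESS {0..1} (resp_payoff s1 s2) a"
    unfolding ESS_def
  proof (intro conjI ballI impI aS disjI2)
    fix q assume "q \<noteq> a"
    have d: "resp_payoff s1 s2 a q - resp_payoff s1 s2 q q = (a - q) * (a - q) * (s1+s2) / 2"
      by (rule key)
    have sq: "(a - q) * (a - q) > 0" using \<open>q \<noteq> a\<close> by (metis eq_iff_diff_eq_0 not_real_square_gt_zero)
    have "(a - q) * (a - q) * (s1+s2) / 2 > 0" using sq pos by simp
    then show "resp_payoff s1 s2 q q < resp_payoff s1 s2 a q"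
      using d by linarith
    show "resp_payoff s1 s2 a a = resp_payoff s1 s2 q a" by (rule eq)
  qed
  have uniq: "p = a" if "ESS {0..1} (resp_payoff s1 s2) p" for p
  proof (rule ccontr)
    assume ne: "p \<noteq> a"
    have c: "resp_payoff s1 s2 p p > resp_payoff s1 s2 a p \<or>
      (resp_payoff s1 s2 p p = resp_payoff s1 s2 a p \<and> resp_payoff s1 s2 p a > resp_payoff s1 s2 a a)"
      using that aS ne unfolding ESS_def by auto
    have "resp_payoff s1 s2 p p - resp_payoff s1 s2 a p = (p - a) * (a - p) * (s1+s2) / 2"
      by (rule key)
    moreover have "(p - a) * (a - p) < 0" using ne
      by (metis diff_gt_0_iff_gt diff_less_0_iff_less linorder_neqE_linordered_idom mult_neg_pos mult_pos_neg)
    ultimately have "resp_payoff s1 s2 p p < resp_payoff s1 s2 a p"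
      using pos by (smt (verit) divide_neg_pos mult_neg_pos)
    then show False using c eq[of p] by linarith
  qed
  show ?thesis using ess uniq unfolding a_def by blast
qed

end
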